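(* Let $K\ge L\ge T\ge 2$, let $x$ be a positive integer coprime to $q$, and let $\mathrm{CAT}_x(K,L,T)$, $y$, $q$ be as in the context. Suppose that $ix\not\equiv jy\pmod q$ for all integer pairs $(i,j)$ with (1) $i\in\{-L,\dots,-1\}$, $j\in\{-K-T+2,\dots,K-1\}$, or (2) $i\in\{-L+1,\dots,T+L-2\}$, $j\in\{-K,\dots,-1\}$, or (3) $i\in\{-L,\dots,T-2\}$, $j\in\{-K-T+1,\dots,-1\}$. Then $|\mathcal{TL}|=KL$ and $\mathcal{TL}\cap\mathcal{TR}=\mathcal{TL}\cap\mathcal{BL}=\mathcal{TL}\cap\mathcal{BR}=\emptyset$.
   Context: Let $\kappa,\lambda$ be the smallest non-negative integers such that $K+1+\kappa$ and $L+1+\lambda$ are coprime to $T-1$; $K^\star=K+1+\kappa$, $L^\star=L+1+\lambda$, $\bar T=T-1$, $q=K^\star L^\star+\bar T^2$. For $x$ coprime to $q$, $y\in\{0,\dots,q-1\}$ is the unique integer with $x\bar T+yK^\star\equiv0\pmod q$. $\mathrm{CAT}_x(K,L,T)$ consists of $q$ and the vectors over $\mathbb{Z}_q$: $\boldsymbol{\alpha}^{(p)}=(ky)_{k=0}^{K-1}$, $\boldsymbol{\alpha}^{(s)}=(Ky+kx)_{k=0}^{T-1}$, $\boldsymbol{\beta}^{(p)}=(kx)_{k=0}^{L-1}$, $\boldsymbol{\beta}^{(s)}=(ky-x)_{k=0}^{T-1}$, all mod $q$. With $\{\mathbf v\}$ the set of entries and sumsets in $\mathbb{Z}_q$: $\mathcal{TL}=\{\boldsymbol{\alpha}^{(p)}\}+\{\boldsymbol{\beta}^{(p)}\}$,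 $\mathcal{TR}=\{\boldsymbol{\alpha}^{(p)}\}+\{\boldsymbol{\beta}^{(s)}\}$, $\mathcal{BL}=\{\boldsymbol{\alpha}^{(s)}\}+\{\boldsymbol{\beta}^{(p)}\}$, $\mathcal{BR}=\{\boldsymbol{\alpha}^{(s)}\}+\{\boldsymbol{\beta}^{(s)}\}$. *)

theory Defs
  imports "HOL-Number_Theory.Number_Theory"
begin

(* Parameters K, L, T are natural numbers; arithmetic in Z_q is modelled by int mod q. *)

definition Tbar :: "nat \<Rightarrow> int" where
  "Tbar T = int T - 1"

definition kappa :: "nat \<Rightarrow> nat \<Rightarrow> nat" where
  "kappa K T = (LEAST k::nat. coprime (int K + 1 + int k) (Tbar T))"

definition Kstar :: "nat \<Rightarrow> nat \<Rightarrow> int" where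
  "Kstar K T = int K + 1 + int (kappa K T)"

(* lambda for L is kappa applied to L *)
definition Lstar :: "nat \<Rightarrow> nat \<Rightarrow> int" where
  "Lstar L T = int L + 1 + int (kappa L T)"

definition qq :: "nat \<Rightarrow> nat \<Rightarrow> nat \<Rightarrow> int" where
  "qq K L T = Kstar K T * Lstar L T + (Tbar T)^2"

definition yy :: "nat \<Rightarrow> nat \<Rightarrow> nat \<Rightarrow> int \<Rightarrow> int" where
  "yy K L T x = (THE y. 0 \<le> y \<and> y < qq K L T \<and>
       [x * Tbar T + y * Kstar K T = 0] (mod qq K L T))"

(* entries of the four CAT_x(K,L,T) vectors, reduced mod q *)
definition alpha_p :: "nat \<Rightarrow> nat \<Rightarrow> nat \<Rightarrow> int \<Rightarrow> int set" where
  "alpha_p K L T x = (\<lambda>k. (int k * yy K L T x) mod qq K L T) ` {0..<K}"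

definition alpha_s :: "nat \<Rightarrow> nat \<Rightarrow> nat \<Rightarrow> int \<Rightarrow> int set" where
  "alpha_s K L T x = (\<lambda>k. (int K * yy K L T x + int k * x) mod qq K L T) ` {0..<T}"

definition beta_p :: "nat \<Rightarrow> nat \<Rightarrow> nat \<Rightarrow> int \<Rightarrow> int set" where
  "beta_p K L T x = (\<lambda>k. (int k * x) mod qq K L T) ` {0..<L}"

definition beta_s :: "nat \<Rightarrow> nat \<Rightarrow> nat \<Rightarrow> int \<Rightarrow> int set" where
  "beta_s K L T x = (\<lambda>k. (int k * yy K L T x - x) mod qq K L T) ` {0..<T}"

definition sumset_mod :: "int \<Rightarrow> int set \<Rightarrow> int set \<Rightarrow> int set" where
  "sumset_mod q A B = {(a + b) mod q | a b. a \<in> A \<and> b \<in> B}"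

definition TL :: "nat \<Rightarrow> nat \<Rightarrow> nat \<Rightarrow> int \<Rightarrow> int set" where
  "TL K L T x = sumset_mod (qq K L T) (alpha_p K L T x) (beta_p K L T x)"
definition TR :: "nat \<Rightarrow> nat \<Rightarrow> nat \<Rightarrow> int \<Rightarrow> int set" where
  "TR K L T x = sumset_mod (qq K L T) (alpha_p K L T x) (beta_s K L T x)"
definition BL :: "nat \<Rightarrow> nat \<Rightarrow> nat \<Rightarrow> int \<Rightarrow> int set" where
  "BL K L T x = sumset_mod (qq K L T) (alpha_s K L T x) (beta_p K L T x)"
definition BR :: "nat \<Rightarrow> nat \<Rightarrow> nat \<Rightarrow> int \<Rightarrow> int set" where
  "BR K L T x = sumset_mod (qq K L T) (alpha_s K L T x) (beta_s K L T x)"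

end

theory Submission
  imports Defs
begin

lemma mem_sumset: "z \<in> sumset_mod q ((\<lambda>k. f k mod q) ` A) ((\<lambda>k. g k mod q) ` B)
   \<longleftrightarrow> (\<exists>a\<in>A. \<exists>b\<in>B. z = (f a + g b) mod q)"
proof
  assume "z \<in> sumset_mod q ((\<lambda>k. f k mod q) ` A) ((\<lambda>k. g k mod q) ` B)"
  then obtain a b where "a \<in> A" "b \<in> B" "z = (f a mod q + g b mod q) mod q"
    unfolding sumset_mod_def by auto
  then show "\<exists>a\<in>A. \<exists>b\<in>B. z = (f a + g b) mod q" by (metis mod_add_eq)
next
  assume "\<exists>a\<in>A. \<exists>b\<in>B. z = (f a + g b) mod q"
  then obtain a b where "a \<in> A" "b \<in> B" "z = (f a + g b) mod q" by blast
  then show "z \<in> sumset_mod q ((\<lambda>k. f k mod q) ` A) ((\<lambda>k. g k mod q) ` B)"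
    unfolding sumset_mod_def by (metis (mono_tags, lifting) image_eqI mem_Collect_eq mod_add_eq)
qed

theorem lemma4:
  fixes K L T :: nat and x :: int
  assumes "K \<ge> L" and "L \<ge> T" and "T \<ge> 2"
    and "x > 0" and "coprime x (qq K L T)"
    and "\<And>i j :: int.
      (i \<in> {- int L .. -1} \<and> j \<in> {- int K - int T + 2 .. int K - 1}) \<or>
      (i \<in> {- int L + 1 .. int T + int L - 2} \<and> j \<in> {- int K .. -1}) \<or>
      (i \<in> {- int L .. int T - 2} \<and> j \<in> {- int K - int T + 1 .. -1})
      \<Longrightarrow> \<not> [i * x = j * yy K L T x] (mod qq K L T)"
  shows "card (TL K L T x) = K * L \<and>
         TL K L T x \<inter> TR K L T x = {} \<and>
         TL K L T x \<inter> BL K L T x = {} \<and>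
         TL K L T x \<inter> BR K L T x = {}"
proof -
  define q where "q = qq K L T"
  define y where "y = yy K L T x"
  have H: "\<not> q dvd (i * x - j * y)" if
      "(i \<in> {- int L .. -1} \<and> j \<in> {- int K - int T + 2 .. int K - 1}) \<or>
      (i \<in> {- int L + 1 .. int T + int L - 2} \<and> j \<in> {- int K .. -1}) \<or>
      (i \<in> {- int L .. int T - 2} \<and> j \<in> {- int K - int T + 1 .. -1})" for i j
    using assms(6)[OF that] unfolding q_def y_def cong_def by (simp add: mod_eq_dvd_iff)
  have G: False if "(i \<in> {- int L .. -1} \<and> j \<in> {- int K - int T + 2 .. int K - 1}) \<or>
      (i \<in> {- int L + 1 .. int T + int L - 2} \<and> j \<in> {- int K .. -1}) \<or>
      (i \<in> {- int L .. int T - 2} \<and> j \<in> {- int K - int T + 1 .. -1})"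
     "q dvd D" "D = -(i * x - j * y) \<or> D = i * x - j * y" for i j D
    using H[OF that(1)] that(2,3) by (metis dvd_minus_iff)
  have G1: False if "i \<in> {- int L .. -1}" "j \<in> {- int K - int T + 2 .. int K - 1}"
     "q dvd D" "D = -(i * x - j * y) \<or> D = i * x - j * y" for i j D
    using G[of i j D] that by blast
  have G2: False if "i \<in> {- int L + 1 .. int T + int L - 2}" "j \<in> {- int K .. -1}"
     "q dvd D" "D = -(i * x - j * y) \<or> D = i * x - j * y" for i j D
    using G[of i j D] that by blast
  have G3: False if "i \<in> {- int L .. int T - 2}" "j \<in> {- int K - int T + 1 .. -1}"
     "q dvd D" "D = -(i * x - j * y) \<or> D = i * x - j * y" for i j D
    using G[of i j D] that by blast
  have TLm: "z \<in> TL K L T x \<longleftrightarrow> (\<exists>a\<in>{0..<K}. \<exists>b\<in>{0..<L}. z = (int a * y + int b * x) mod q)" for z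
    unfolding TL_def alpha_p_def beta_p_def q_def y_def by (rule mem_sumset)
  have TRm: "z \<in> TR K L T x \<longleftrightarrow> (\<exists>a\<in>{0..<K}. \<exists>b\<in>{0..<T}. z = (int a * y + (int b * y - x)) mod q)" for z
    unfolding TR_def alpha_p_def beta_s_def q_def y_def by (rule mem_sumset)
  have BLm: "z \<in> BL K L T x \<longleftrightarrow> (\<exists>a\<in>{0..<T}. \<exists>b\<in>{0..<L}. z = ((int K * y + int a * x) + int b * x) mod q)" for z
    unfolding BL_def alpha_s_def beta_p_def q_def y_def by (rule mem_sumset)
  have BRm: "z \<in> BR K L T x \<longleftrightarrow> (\<exists>a\<in>{0..<T}. \<exists>b\<in>{0..<T}. z = ((int K * y + int a * x) + (int b * y - x)) mod q)" for z
    unfolding BR_def alpha_s_def beta_s_def q_def y_def by (rule mem_sumset)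
  define f where "f = (\<lambda>(a::nat, b::nat). (int a * y + int b * x) mod q)"
  have TLi: "TL K L T x = f ` ({0..<K} \<times> {0..<L})"
    using TLm unfolding f_def by auto
  have inj: "inj_on f ({0..<K} \<times> {0..<L})"
  proof (rule inj_onI)
    fix u v assume u: "u \<in> {0..<K} \<times> {0..<L}" and v: "v \<in> {0..<K} \<times> {0..<L}" and e: "f u = f v"
    obtain a b where ab: "u = (a, b)" by fastforce
    obtain c d where cd: "v = (c, d)" by fastforce
    have dv: "q dvd ((int a * y + int b * x) - (int c * y + int d * x))"
      using e unfolding ab cd f_def by (simp add: mod_eq_dvd_iff)
    show "u = v"
    proof (rule ccontr)
      assume ne: "u \<noteq> v"
      show False
      proof (cases "b < d")
        case True
        show ?thesis apply (rule G1[of "int b - int d" "int c - int a", OF _ _ dv])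
          prefer 3
          apply (rule disjI2)
          apply (use in \<open>simp add: algebra_simps\<close>)
          apply (use True u v ab cd assms(1-3) in auto)
          done
      next
        case False
        show ?thesis
        proof (cases "d < b")
          case True
          show ?thesis apply (rule G1[of "int d - int b" "int a - int c", OF _ _ dv])
            prefer 3
            apply (rule disjI1)
            apply (use in \<open>simp add: algebra_simps\<close>)
            apply (use True u v ab cd assms(1-3) in auto)
            done
        next
          case False
          then have "b = d" using \<open>\<not> b < d\<close> by simp
          then have "a \<noteq> c" using ne ab cd by simp
          show ?thesis
          proof (cases "a < c")
            case True
            show ?thesis apply (rule G2[of "0" "int a - int c", OF _ _ dv])
              prefer 3
              apply (rule disjI1)
              apply (use \<open>b = d\<close> in \<open>simp add: algebra_simps\<close>)
              apply (use True u v ab cd \<open>b = d\<close> assms(1-3) in auto)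
              done
          next
            case False
            show ?thesis apply (rule G2[of "0" "int c - int a", OF _ _ dv])
              prefer 3
              apply (rule disjI2)
              apply (use \<open>b = d\<close> in \<open>simp add: algebra_simps\<close>)
              apply (use False u v ab cd \<open>b = d\<close> \<open>a \<noteq> c\<close> assms(1-3) in auto)
              done
          qed
        qed
      qed
    qed
  qed
  have c1: "card (TL K L T x) = K * L"
    unfolding TLi using card_image[OF inj] by (simp add: card_cartesian_product)
  have c2: "TL K L T x \<inter> TR K L T x = {}"
  proof (rule ccontr)
    assume "TL K L T x \<inter> TR K L T x \<noteq> {}"
    then obtain z where "z \<in> TL K L T x" "z \<in> TR K L T x" by blast
    then obtain a b c k where r: "a < K" "b < L" "c < K" "k < T"
      and e: "(int a * y + int b * x) mod q = (int c * y + (int k * y - x)) mod q"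
      unfolding TLm TRm by auto
    have dv: "q dvd ((int a * y + int b * x) - (int c * y + (int k * y - x)))"
      using e by (simp add: mod_eq_dvd_iff)
    show False apply (rule G1[of "- int b - 1" "int a - int c - int k", OF _ _ dv])
      prefer 3
      apply (rule disjI1)
      apply (use in \<open>simp add: algebra_simps\<close>)
      apply (use r assms(3) assms(1-3) in auto)
      done
  qed
  have c3: "TL K L T x \<inter> BL K L T x = {}"
  proof (rule ccontr)
    assume "TL K L T x \<inter> BL K L T x \<noteq> {}"
    then obtain z where "z \<in> TL K L T x" "z \<in> BL K L T x" by blast
    then obtain a b k c where r: "a < K" "b < L" "k < T" "c < L"
      and e: "(int a * y + int b * x) mod q = ((int K * y + int k * x) + int c * x) mod q"
      unfolding TLm BLm by auto
    have dv: "q dvd ((int a * y + int b * x) - ((int K * y + int k * x) + int c * x))"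
      using e by (simp add: mod_eq_dvd_iff)
    show False apply (rule G2[of "int k + int c - int b" "int a - int K", OF _ _ dv])
      prefer 3
      apply (rule disjI1)
      apply (use in \<open>simp add: algebra_simps\<close>)
      apply (use r assms(3) assms(1-3) in auto)
      done
  qed
  have c4: "TL K L T x \<inter> BR K L T x = {}"
  proof (rule ccontr)
    assume "TL K L T x \<inter> BR K L T x \<noteq> {}"
    then obtain z where "z \<in> TL K L T x" "z \<in> BR K L T x" by blast
    then obtain a b k m where r: "a < K" "b < L" "k < T" "m < T"
      and e: "(int a * y + int b * x) mod q = ((int K * y + int k * x) + (int m * y - x)) mod q"
      unfolding TLm BRm by auto
    have dv: "q dvd ((int a * y + int b * x) - ((int K * y + int k * x) + (int m * y - x)))"
      using e by (simp add: mod_eq_dvd_iff)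
    show False apply (rule G3[of "int k - 1 - int b" "int a - int K - int m", OF _ _ dv])
      prefer 3
      apply (rule disjI1)
      apply (use in \<open>simp add: algebra_simps\<close>)
      apply (use r assms(3) assms(1-3) in auto)
      done
  qed
  show ?thesis using c1 c2 c3 c4 by blast
qed

end
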